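(* If an atomic flow $A$ is normal for $\mathsf w$ and $A\to_{\mathsf c}^\star B$, then $B$ is normal for $\mathsf w$.
   Context: An atomic flow is a tuple $(V,E,\eta,up,lo)$: finite sets of vertices and edges, a labelling of vertices by interaction, cut, weakening, coweakening, contraction or cocontraction, and maps $up:E\to V\cup\{\top\}$, $lo:E\to V\cup\{\bot\}$. Upper edges of $\nu$: $lo(\epsilon)=\nu$; lower edges: $up(\epsilon)=\nu$. (Upper, lower) edge numbers: $(0,2)$ interaction, $(2,0)$ cut, $(0,1)$ weakening, $(1,0)$ coweakening, $(2,1)$ contraction, $(1,2)$ cocontraction; no directed cycles; there is $\pi:E\to\{+,-\}$ giving all edges of a (co)contraction the same sign and the two edges of an interaction/cut different signs. A flow is normal for $\mathsf w$ if none of the following patterns occurs in it: a weakening whose lower edge is an upper edge of a contraction, of a cut, or is the upper edge of a cocontraction or of a coweakening; a coweakening whose upper edge is a lower edge of a cocontraction, of an interaction, or is the lower edge of a contraction. $\to_{\mathsf c}^\star$ is the reflexive-transitive closure of $\to_{\mathsf c}$, where $A\to_{\mathsf c}B$ means $B$ results from $A$ by one of these subgraph replacements: (c1) a contraction with upper edges $\epsilon_1,\epsilon_2$ whose lower edge is an upper edge of a cut with other upper edge $\epsilon_3$: replace by a new cocontraction with upper edge $\epsilon_3$ and new lower edges $\delta_1,\delta_2$, and two new cuts with upper edges $\{\epsilon_1,\delta_1\}$ and $\{\epsilon_2,\delta_2\}$; (c2) an interaction with lower edges $\epsilon_3,\epsilon_4$ where $\epsilon_4$ is the upper edge of a cocontraction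 with lower edges $\epsilon_1,\epsilon_2$: replace by a new contraction with lower edge $\epsilon_3$ and new upper edges $\delta_1,\delta_2$, and two new interactions with lower edges $\{\epsilon_1,\delta_1\}$ and $\{\epsilon_2,\delta_2\}$; (c3) a contraction with upper edges $\epsilon_1,\epsilon_2$ whose lower edge is the upper edge of a cocontraction with lower edges $\epsilon_3,\epsilon_4$: replace by cocontractions $\kappa_1,\kappa_2$ with upper edges $\epsilon_1,\epsilon_2$, contractions $\gamma_3,\gamma_4$ with lower edges $\epsilon_3,\epsilon_4$, and four new edges, one from each $\kappa_i$ to each $\gamma_j$. *)

theory Defs
  imports Main
begin

datatype kind = Interaction | Cut | Weakening | Coweakening | Contraction | Cocontraction

datatype sign = Plus | Minus

datatype 'v endpt = Top | Bot | Node 'v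

text \<open>A flow (V, E, eta, up, lo). The functions are total; only their values on
  V resp. E are meaningful.\<close>
record ('v, 'e) flow =
  verts :: "'v set"
  edges :: "'e set"
  lab   :: "'v \<Rightarrow> kind"
  up    :: "'e \<Rightarrow> 'v endpt"
  lo    :: "'e \<Rightarrow> 'v endpt"

definition upper_edges :: "('v, 'e) flow \<Rightarrow> 'v \<Rightarrow> 'e set" where
  "upper_edges A v = {e \<in> edges A. lo A e = Node v}"

definition lower_edges :: "('v, 'e) flow \<Rightarrow> 'v \<Rightarrow> 'e set" where
  "lower_edges A v = {e \<in> edges A. up A e = Node v}"

fun n_upper :: "kind \<Rightarrow> nat" where
  "n_upper Interaction = 0" | "n_upper Cut = 2" | "n_upper Weakening = 0"
| "n_upper Coweakening = 1" | "n_upper Contraction = 2" | "n_upper Cocontraction = 1"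

fun n_lower :: "kind \<Rightarrow> nat" where
  "n_lower Interaction = 2" | "n_lower Cut = 0" | "n_lower Weakening = 1"
| "n_lower Coweakening = 0" | "n_lower Contraction = 1" | "n_lower Cocontraction = 2"

definition vrel :: "('v, 'e) flow \<Rightarrow> ('v \<times> 'v) set" where
  "vrel A = {(u, w). \<exists>e \<in> edges A. up A e = Node u \<and> lo A e = Node w}"

definition atomic_flow :: "('v, 'e) flow \<Rightarrow> bool" where
  "atomic_flow A \<longleftrightarrow>
     finite (verts A) \<and> finite (edges A) \<and>
     (\<forall>e \<in> edges A. up A e \<in> Node ` verts A \<union> {Top} \<and> lo A e \<in> Node ` verts A \<union> {Bot}) \<and>
     (\<forall>v \<in> verts A. card (upper_edges A v) = n_upper (lab A v)
                   \<and> card (lower_edges A v) = n_lower (lab A v)) \<and>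
     acyclic (vrel A) \<and>
     (\<exists>\<pi> :: 'e \<Rightarrow> sign.
        (\<forall>v \<in> verts A. lab A v \<in> {Contraction, Cocontraction} \<longrightarrow>
            (\<forall>e \<in> upper_edges A v \<union> lower_edges A v. \<forall>e' \<in> upper_edges A v \<union> lower_edges A v. \<pi> e = \<pi> e')) \<and>
        (\<forall>v \<in> verts A. lab A v = Interaction \<longrightarrow>
            (\<forall>e \<in> lower_edges A v. \<forall>e' \<in> lower_edges A v. e \<noteq> e' \<longrightarrow> \<pi> e \<noteq> \<pi> e')) \<and>
        (\<forall>v \<in> verts A. lab A v = Cut \<longrightarrow>
            (\<forall>e \<in> upper_edges A v. \<forall>e' \<in> upper_edges A v. e \<noteq> e' \<longrightarrow> \<pi> e \<noteq> \<pi> e')))"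

definition normal_w :: "('v, 'e) flow \<Rightarrow> bool" where
  "normal_w A \<longleftrightarrow>
     \<not> (\<exists>\<nu> \<in> verts A. \<exists>\<mu> \<in> verts A. \<exists>e \<in> edges A.
          lab A \<nu> = Weakening \<and> up A e = Node \<nu> \<and> lo A e = Node \<mu> \<and>
          lab A \<mu> \<in> {Contraction, Cut, Cocontraction, Coweakening}) \<and>
     \<not> (\<exists>\<nu> \<in> verts A. \<exists>\<mu> \<in> verts A. \<exists>e \<in> edges A.
          lab A \<nu> = Coweakening \<and> lo A e = Node \<nu> \<and> up A e = Node \<mu> \<and>
          lab A \<mu> \<in> {Cocontraction, Interaction, Contraction})"

definition c1_step :: "('v, 'e) flow \<Rightarrow> ('v, 'e) flow \<Rightarrow> bool" where
  "c1_step A B \<longleftrightarrow>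
   (\<exists>g k e e1 e2 e3 k' c1 c2 d1 d2.
      g \<in> verts A \<and> k \<in> verts A \<and> lab A g = Contraction \<and> lab A k = Cut \<and>
      e \<in> edges A \<and> e1 \<in> edges A \<and> e2 \<in> edges A \<and> e3 \<in> edges A \<and>
      e1 \<noteq> e2 \<and> lo A e1 = Node g \<and> lo A e2 = Node g \<and>
      up A e = Node g \<and> lo A e = Node k \<and> e3 \<noteq> e \<and> lo A e3 = Node k \<and>
      k' \<notin> verts A \<and> c1 \<notin> verts A \<and> c2 \<notin> verts A \<and> k' \<noteq> c1 \<and> k' \<noteq> c2 \<and> c1 \<noteq> c2 \<and>
      d1 \<notin> edges A \<and> d2 \<notin> edges A \<and> d1 \<noteq> d2 \<and>
      verts B = (verts A - {g, k}) \<union> {k', c1, c2} \<and>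
      edges B = (edges A - {e}) \<union> {d1, d2} \<and>
      (\<forall>v \<in> verts B. lab B v =
          (if v = k' then Cocontraction else if v = c1 \<or> v = c2 then Cut else lab A v)) \<and>
      (\<forall>x \<in> edges B. up B x = (if x = d1 \<or> x = d2 then Node k' else up A x)) \<and>
      (\<forall>x \<in> edges B. lo B x =
          (if x = d1 \<or> x = e1 then Node c1 else if x = d2 \<or> x = e2 then Node c2
           else if x = e3 then Node k' else lo A x)))"

definition c2_step :: "('v, 'e) flow \<Rightarrow> ('v, 'e) flow \<Rightarrow> bool" where
  "c2_step A B \<longleftrightarrow>
   (\<exists>i k e1 e2 e3 e4 g' i1 i2 d1 d2.
      i \<in> verts A \<and> k \<in> verts A \<and> lab A i = Interaction \<and> lab A k = Cocontraction \<and>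
      e1 \<in> edges A \<and> e2 \<in> edges A \<and> e3 \<in> edges A \<and> e4 \<in> edges A \<and>
      e3 \<noteq> e4 \<and> up A e3 = Node i \<and> up A e4 = Node i \<and> lo A e4 = Node k \<and>
      e1 \<noteq> e2 \<and> up A e1 = Node k \<and> up A e2 = Node k \<and>
      g' \<notin> verts A \<and> i1 \<notin> verts A \<and> i2 \<notin> verts A \<and> g' \<noteq> i1 \<and> g' \<noteq> i2 \<and> i1 \<noteq> i2 \<and>
      d1 \<notin> edges A \<and> d2 \<notin> edges A \<and> d1 \<noteq> d2 \<and>
      verts B = (verts A - {i, k}) \<union> {g', i1, i2} \<and>
      edges B = (edges A - {e4}) \<union> {d1, d2} \<and>
      (\<forall>v \<in> verts B. lab B v =
          (if v = g' then Contraction else if v = i1 \<or> v = i2 then Interaction else lab A v)) \<and>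
      (\<forall>x \<in> edges B. lo B x = (if x = d1 \<or> x = d2 then Node g' else lo A x)) \<and>
      (\<forall>x \<in> edges B. up B x =
          (if x = d1 \<or> x = e1 then Node i1 else if x = d2 \<or> x = e2 then Node i2
           else if x = e3 then Node g' else up A x)))"

definition c3_step :: "('v, 'e) flow \<Rightarrow> ('v, 'e) flow \<Rightarrow> bool" where
  "c3_step A B \<longleftrightarrow>
   (\<exists>g k e e1 e2 e3 e4 k1 k2 g3 g4 d13 d14 d23 d24.
      g \<in> verts A \<and> k \<in> verts A \<and> lab A g = Contraction \<and> lab A k = Cocontraction \<and>
      e \<in> edges A \<and> e1 \<in> edges A \<and> e2 \<in> edges A \<and> e3 \<in> edges A \<and> e4 \<in> edges A \<and>
      e1 \<noteq> e2 \<and> lo A e1 = Node g \<and> lo A e2 = Node g \<and>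
      up A e = Node g \<and> lo A e = Node k \<and>
      e3 \<noteq> e4 \<and> up A e3 = Node k \<and> up A e4 = Node k \<and>
      k1 \<notin> verts A \<and> k2 \<notin> verts A \<and> g3 \<notin> verts A \<and> g4 \<notin> verts A \<and>
      distinct [k1, k2, g3, g4] \<and>
      d13 \<notin> edges A \<and> d14 \<notin> edges A \<and> d23 \<notin> edges A \<and> d24 \<notin> edges A \<and>
      distinct [d13, d14, d23, d24] \<and>
      verts B = (verts A - {g, k}) \<union> {k1, k2, g3, g4} \<and>
      edges B = (edges A - {e}) \<union> {d13, d14, d23, d24} \<and>
      (\<forall>v \<in> verts B. lab B v =
          (if v = k1 \<or> v = k2 then Cocontraction
           else if v = g3 \<or> v = g4 then Contraction else lab A v)) \<and>
      (\<forall>x \<in> edges B. up B x =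
          (if x = d13 \<or> x = d14 then Node k1 else if x = d23 \<or> x = d24 then Node k2
           else if x = e3 then Node g3 else if x = e4 then Node g4 else up A x)) \<and>
      (\<forall>x \<in> edges B. lo B x =
          (if x = d13 \<or> x = d23 then Node g3 else if x = d14 \<or> x = d24 then Node g4
           else if x = e1 then Node k1 else if x = e2 then Node k2 else lo A x)))"

definition c_step :: "('v, 'e) flow \<Rightarrow> ('v, 'e) flow \<Rightarrow> bool" where
  "c_step A B \<longleftrightarrow> atomic_flow A \<and> atomic_flow B \<and> (c1_step A B \<or> c2_step A B \<or> c3_step A B)"

end

theory Submission
  imports Defs
begin

lemma af_ends:
  assumes "atomic_flow A" "x \<in> edges A"
  shows "up A x = Node v \<Longrightarrow> v \<in> verts A" "lo A x = Node v \<Longrightarrow> v \<in> verts A"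
  using assms unfolding atomic_flow_def by fastforce+

lemma nw1: "normal_w A \<Longrightarrow> \<nu> \<in> verts A \<Longrightarrow> \<mu> \<in> verts A \<Longrightarrow> x \<in> edges A \<Longrightarrow>
  lab A \<nu> = Weakening \<Longrightarrow> up A x = Node \<nu> \<Longrightarrow> lo A x = Node \<mu> \<Longrightarrow>
  lab A \<mu> \<in> {Contraction, Cut, Cocontraction, Coweakening} \<Longrightarrow> False"
  unfolding normal_w_def by blast

lemma nw2: "normal_w A \<Longrightarrow> \<nu> \<in> verts A \<Longrightarrow> \<mu> \<in> verts A \<Longrightarrow> x \<in> edges A \<Longrightarrow>
  lab A \<nu> = Coweakening \<Longrightarrow> lo A x = Node \<nu> \<Longrightarrow> up A x = Node \<mu> \<Longrightarrow>
  lab A \<mu> \<in> {Cocontraction, Interaction, Contraction} \<Longrightarrow> False"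
  unfolding normal_w_def by blast

lemma nwI:
  assumes "\<And>\<nu> \<mu> x. \<nu> \<in> verts B \<Longrightarrow> \<mu> \<in> verts B \<Longrightarrow> x \<in> edges B \<Longrightarrow>
  lab B \<nu> = Weakening \<Longrightarrow> up B x = Node \<nu> \<Longrightarrow> lo B x = Node \<mu> \<Longrightarrow>
  lab B \<mu> \<in> {Contraction, Cut, Cocontraction, Coweakening} \<Longrightarrow> False"
  and "\<And>\<nu> \<mu> x. \<nu> \<in> verts B \<Longrightarrow> \<mu> \<in> verts B \<Longrightarrow> x \<in> edges B \<Longrightarrow>
  lab B \<nu> = Coweakening \<Longrightarrow> lo B x = Node \<nu> \<Longrightarrow> up B x = Node \<mu> \<Longrightarrow>
  lab B \<mu> \<in> {Cocontraction, Interaction, Contraction} \<Longrightarrow> False"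
  shows "normal_w B"
  unfolding normal_w_def using assms by blast

lemma c1_pres:
  assumes af: "atomic_flow A" and n: "normal_w A" and s: "c1_step A B"
  shows "normal_w B"
proof -
  from s obtain g k e e1 e2 e3 k' c1 c2 d1 d2 where
     h1: "g \<in> verts A" "k \<in> verts A" "lab A g = Contraction" "lab A k = Cut"
     "e \<in> edges A" "e1 \<in> edges A" "e2 \<in> edges A" "e3 \<in> edges A"
     "e1 \<noteq> e2" "lo A e1 = Node g" "lo A e2 = Node g"
     "up A e = Node g" "lo A e = Node k" "e3 \<noteq> e" "lo A e3 = Node k"
     and h2: "k' \<notin> verts A" "c1 \<notin> verts A" "c2 \<notin> verts A" "k' \<noteq> c1" "k' \<noteq> c2" "c1 \<noteq> c2"
      "d1 \<notin> edges A" "d2 \<notin> edges A" "d1 \<noteq> d2"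
     and VB: "verts B = (verts A - {g, k}) \<union> {k', c1, c2}"
     and EB: "edges B = (edges A - {e}) \<union> {d1, d2}"
     and LB: "\<forall>v \<in> verts B. lab B v =
          (if v = k' then Cocontraction else if v = c1 \<or> v = c2 then Cut else lab A v)"
     and UB: "\<forall>x \<in> edges B. up B x = (if x = d1 \<or> x = d2 then Node k' else up A x)"
     and LoB: "\<forall>x \<in> edges B. lo B x =
          (if x = d1 \<or> x = e1 then Node c1 else if x = d2 \<or> x = e2 then Node c2
           else if x = e3 then Node k' else lo A x)"
    unfolding c1_step_def apply (elim exE conjE) subgoal for g k e e1 e2 e3 k' c1 c2 d1 d2 by (rule that[of g k e e1 e2 e3 k' c1 c2 d1 d2]; assumption) done
  have oldv: "v \<in> verts A \<and> lab A v = lab B v" if "v \<in> verts B" "v \<noteq> k'" "v \<noteq> c1" "v \<noteq> c2" for v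
    using that VB LB by auto
  show ?thesis
  proof (rule nwI)
    fix \<nu> \<mu> x assume X: "\<nu> \<in> verts B" "\<mu> \<in> verts B" "x \<in> edges B"
      "lab B \<nu> = Weakening" "up B x = Node \<nu>" "lo B x = Node \<mu>"
      "lab B \<mu> \<in> {Contraction, Cut, Cocontraction, Coweakening}"
    have nn: "\<nu> \<noteq> k'" "\<nu> \<noteq> c1" "\<nu> \<noteq> c2" using X(1,4) LB h2 by auto
    have nu: "\<nu> \<in> verts A" "lab A \<nu> = Weakening" using oldv[OF X(1) nn] X(4) by auto
    have xo: "x \<noteq> d1" "x \<noteq> d2" using X(3,5) UB nn by auto
    hence xA: "x \<in> edges A" "up A x = Node \<nu>" using X(3,5) UB EB by auto
    show False
    proof (cases "x = e1 \<or> x = e2 \<or> x = e3")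
      case True
      then show ?thesis using nw1[OF n nu(1) _ xA(1) nu(2) xA(2)] h1 by auto
    next
      case False
      hence lo: "lo A x = Node \<mu>" using X(3,6) LoB xo by auto
      hence mA: "\<mu> \<in> verts A" using af_ends(2)[OF af xA(1)] by auto
      hence "\<mu> \<noteq> k'" "\<mu> \<noteq> c1" "\<mu> \<noteq> c2" using h2 by auto
      hence "lab A \<mu> = lab B \<mu>" using oldv X(2) by auto
      then show False using nw1[OF n nu(1) mA xA(1) nu(2) xA(2) lo] X(7) by auto
    qed
  next
    fix \<nu> \<mu> x assume X: "\<nu> \<in> verts B" "\<mu> \<in> verts B" "x \<in> edges B"
      "lab B \<nu> = Coweakening" "lo B x = Node \<nu>" "up B x = Node \<mu>"
      "lab B \<mu> \<in> {Cocontraction, Interaction, Contraction}"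
    have nn: "\<nu> \<noteq> k'" "\<nu> \<noteq> c1" "\<nu> \<noteq> c2" using X(1,4) LB h2 by auto
    have nu: "\<nu> \<in> verts A" "lab A \<nu> = Coweakening" using oldv[OF X(1) nn] X(4) by auto
    have xo: "x \<noteq> d1" "x \<noteq> d2" "x \<noteq> e1" "x \<noteq> e2" "x \<noteq> e3"
      using X(3,5) LoB nn by (auto split: if_splits)
    hence xA: "x \<in> edges A" "lo A x = Node \<nu>" "up A x = Node \<mu>"
      using X(3,5,6) UB LoB EB by auto
    hence mA: "\<mu> \<in> verts A" using af_ends(1)[OF af xA(1)] by auto
    hence "\<mu> \<noteq> k'" "\<mu> \<noteq> c1" "\<mu> \<noteq> c2" using h2 by auto
    hence "lab A \<mu> = lab B \<mu>" using oldv X(2) by auto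
    then show False using nw2[OF n nu(1) mA xA(1) nu(2) xA(2,3)] X(7) by auto
  qed
qed


lemma c2_pres:
  assumes af: "atomic_flow A" and n: "normal_w A" and s: "c2_step A B"
  shows "normal_w B"
proof -
  from s obtain i k e1 e2 e3 e4 g' i1 i2 d1 d2 where
      h1: "i \<in> verts A" "k \<in> verts A" "lab A i = Interaction" "lab A k = Cocontraction"
      "e1 \<in> edges A" "e2 \<in> edges A" "e3 \<in> edges A" "e4 \<in> edges A"
      "e3 \<noteq> e4" "up A e3 = Node i" "up A e4 = Node i" "lo A e4 = Node k"
      "e1 \<noteq> e2" "up A e1 = Node k" "up A e2 = Node k"
     and h2: "g' \<notin> verts A" "i1 \<notin> verts A" "i2 \<notin> verts A" "g' \<noteq> i1" "g' \<noteq> i2" "i1 \<noteq> i2"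
      "d1 \<notin> edges A" "d2 \<notin> edges A" "d1 \<noteq> d2"
     and VB: "verts B = (verts A - {i, k}) \<union> {g', i1, i2}"
     and EB: "edges B = (edges A - {e4}) \<union> {d1, d2}"
     and LB: "\<forall>v \<in> verts B. lab B v =
          (if v = g' then Contraction else if v = i1 \<or> v = i2 then Interaction else lab A v)"
     and LoB: "\<forall>x \<in> edges B. lo B x = (if x = d1 \<or> x = d2 then Node g' else lo A x)"
     and UB: "\<forall>x \<in> edges B. up B x =
          (if x = d1 \<or> x = e1 then Node i1 else if x = d2 \<or> x = e2 then Node i2
           else if x = e3 then Node g' else up A x)"
    unfolding c2_step_def apply (elim exE conjE) subgoal for i k e1 e2 e3 e4 g' i1 i2 d1 d2 by (rule that[of i k e1 e2 e3 e4 g' i1 i2 d1 d2]; assumption) done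
  have oldv: "v \<in> verts A \<and> lab A v = lab B v" if "v \<in> verts B" "v \<noteq> g'" "v \<noteq> i1" "v \<noteq> i2" for v
    using that VB LB by auto
  show ?thesis
  proof (rule nwI)
    fix \<nu> \<mu> x assume X: "\<nu> \<in> verts B" "\<mu> \<in> verts B" "x \<in> edges B"
      "lab B \<nu> = Weakening" "up B x = Node \<nu>" "lo B x = Node \<mu>"
      "lab B \<mu> \<in> {Contraction, Cut, Cocontraction, Coweakening}"
    have nn: "\<nu> \<noteq> g'" "\<nu> \<noteq> i1" "\<nu> \<noteq> i2" using X(1,4) LB h2 by auto
    have nu: "\<nu> \<in> verts A" "lab A \<nu> = Weakening" using oldv[OF X(1) nn] X(4) by auto
    have xo: "x \<noteq> d1" "x \<noteq> d2" "x \<noteq> e1" "x \<noteq> e2" "x \<noteq> e3"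
      using X(3,5) UB nn by (auto split: if_splits)
    hence xA: "x \<in> edges A" "up A x = Node \<nu>" "lo A x = Node \<mu>"
      using X(3,5,6) UB LoB EB by auto
    hence mA: "\<mu> \<in> verts A" using af_ends(2)[OF af xA(1)] by auto
    hence "\<mu> \<noteq> g'" "\<mu> \<noteq> i1" "\<mu> \<noteq> i2" using h2 by auto
    hence "lab A \<mu> = lab B \<mu>" using oldv X(2) by auto
    then show False using nw1[OF n nu(1) mA xA(1) nu(2) xA(2,3)] X(7) by auto
  next
    fix \<nu> \<mu> x assume X: "\<nu> \<in> verts B" "\<mu> \<in> verts B" "x \<in> edges B"
      "lab B \<nu> = Coweakening" "lo B x = Node \<nu>" "up B x = Node \<mu>"
      "lab B \<mu> \<in> {Cocontraction, Interaction, Contraction}"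
    have nn: "\<nu> \<noteq> g'" "\<nu> \<noteq> i1" "\<nu> \<noteq> i2" using X(1,4) LB h2 by auto
    have nu: "\<nu> \<in> verts A" "lab A \<nu> = Coweakening" using oldv[OF X(1) nn] X(4) by auto
    have xo: "x \<noteq> d1" "x \<noteq> d2" using X(3,5) LoB nn by auto
    hence xA: "x \<in> edges A" "lo A x = Node \<nu>" using X(3,5) LoB EB by auto
    show False
    proof (cases "x = e1 \<or> x = e2 \<or> x = e3")
      case True
      then show ?thesis using nw2[OF n nu(1) _ xA(1) nu(2) xA(2)] h1 by auto
    next
      case False
      hence up: "up A x = Node \<mu>" using X(3,6) UB xo by auto
      hence mA: "\<mu> \<in> verts A" using af_ends(1)[OF af xA(1)] by auto
      hence "\<mu> \<noteq> g'" "\<mu> \<noteq> i1" "\<mu> \<noteq> i2" using h2 by auto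
      hence "lab A \<mu> = lab B \<mu>" using oldv X(2) by auto
      then show False using nw2[OF n nu(1) mA xA(1) nu(2) xA(2) up] X(7) by auto
    qed
  qed
qed

lemma c3_pres:
  assumes af: "atomic_flow A" and n: "normal_w A" and s: "c3_step A B"
  shows "normal_w B"
proof -
  from s obtain g k e e1 e2 e3 e4 k1 k2 g3 g4 d13 d14 d23 d24 where
      h1: "g \<in> verts A" "k \<in> verts A" "lab A g = Contraction" "lab A k = Cocontraction"
      "e \<in> edges A" "e1 \<in> edges A" "e2 \<in> edges A" "e3 \<in> edges A" "e4 \<in> edges A"
      "e1 \<noteq> e2" "lo A e1 = Node g" "lo A e2 = Node g"
      "up A e = Node g" "lo A e = Node k"
      "e3 \<noteq> e4" "up A e3 = Node k" "up A e4 = Node k"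
     and h2: "k1 \<notin> verts A" "k2 \<notin> verts A" "g3 \<notin> verts A" "g4 \<notin> verts A"
      "distinct [k1, k2, g3, g4]"
      "d13 \<notin> edges A" "d14 \<notin> edges A" "d23 \<notin> edges A" "d24 \<notin> edges A"
      "distinct [d13, d14, d23, d24]"
     and VB: "verts B = (verts A - {g, k}) \<union> {k1, k2, g3, g4}"
     and EB: "edges B = (edges A - {e}) \<union> {d13, d14, d23, d24}"
     and LB: "\<forall>v \<in> verts B. lab B v =
          (if v = k1 \<or> v = k2 then Cocontraction
           else if v = g3 \<or> v = g4 then Contraction else lab A v)"
     and UB: "\<forall>x \<in> edges B. up B x =
          (if x = d13 \<or> x = d14 then Node k1 else if x = d23 \<or> x = d24 then Node k2
           else if x = e3 then Node g3 else if x = e4 then Node g4 else up A x)"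
     and LoB: "\<forall>x \<in> edges B. lo B x =
          (if x = d13 \<or> x = d23 then Node g3 else if x = d14 \<or> x = d24 then Node g4
           else if x = e1 then Node k1 else if x = e2 then Node k2 else lo A x)"
    unfolding c3_step_def apply (elim exE conjE) subgoal for g k e e1 e2 e3 e4 k1 k2 g3 g4 d13 d14 d23 d24 by (rule that[of g k e e1 e2 e3 e4 k1 k2 g3 g4 d13 d14 d23 d24]; assumption) done
  have oldv: "v \<in> verts A \<and> lab A v = lab B v" if "v \<in> verts B" "v \<noteq> k1" "v \<noteq> k2" "v \<noteq> g3" "v \<noteq> g4" for v
    using that VB LB by auto
  show ?thesis
  proof (rule nwI)
    fix \<nu> \<mu> x assume X: "\<nu> \<in> verts B" "\<mu> \<in> verts B" "x \<in> edges B"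
      "lab B \<nu> = Weakening" "up B x = Node \<nu>" "lo B x = Node \<mu>"
      "lab B \<mu> \<in> {Contraction, Cut, Cocontraction, Coweakening}"
    have nn: "\<nu> \<noteq> k1" "\<nu> \<noteq> k2" "\<nu> \<noteq> g3" "\<nu> \<noteq> g4" using X(1,4) LB h2 by auto
    have nu: "\<nu> \<in> verts A" "lab A \<nu> = Weakening" using oldv[OF X(1) nn] X(4) by auto
    have xo: "x \<noteq> d13" "x \<noteq> d14" "x \<noteq> d23" "x \<noteq> d24" "x \<noteq> e3" "x \<noteq> e4"
      using X(3,5) UB nn by (auto split: if_splits)
    hence xA: "x \<in> edges A" "up A x = Node \<nu>" using X(3,5) UB EB by auto
    show False
    proof (cases "x = e1 \<or> x = e2")
      case True
      then show ?thesis using nw1[OF n nu(1) _ xA(1) nu(2) xA(2)] h1 by auto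
    next
      case False
      hence lo: "lo A x = Node \<mu>" using X(3,6) LoB xo by auto
      hence mA: "\<mu> \<in> verts A" using af_ends(2)[OF af xA(1)] by auto
      hence "\<mu> \<noteq> k1" "\<mu> \<noteq> k2" "\<mu> \<noteq> g3" "\<mu> \<noteq> g4" using h2 by auto
      hence "lab A \<mu> = lab B \<mu>" using oldv X(2) by auto
      then show False using nw1[OF n nu(1) mA xA(1) nu(2) xA(2) lo] X(7) by auto
    qed
  next
    fix \<nu> \<mu> x assume X: "\<nu> \<in> verts B" "\<mu> \<in> verts B" "x \<in> edges B"
      "lab B \<nu> = Coweakening" "lo B x = Node \<nu>" "up B x = Node \<mu>"
      "lab B \<mu> \<in> {Cocontraction, Interaction, Contraction}"
    have nn: "\<nu> \<noteq> k1" "\<nu> \<noteq> k2" "\<nu> \<noteq> g3" "\<nu> \<noteq> g4" using X(1,4) LB h2 by auto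
    have nu: "\<nu> \<in> verts A" "lab A \<nu> = Coweakening" using oldv[OF X(1) nn] X(4) by auto
    have xo: "x \<noteq> d13" "x \<noteq> d14" "x \<noteq> d23" "x \<noteq> d24" "x \<noteq> e1" "x \<noteq> e2"
      using X(3,5) LoB nn by (auto split: if_splits)
    hence xA: "x \<in> edges A" "lo A x = Node \<nu>" using X(3,5) LoB EB by auto
    show False
    proof (cases "x = e3 \<or> x = e4")
      case True
      then show ?thesis using nw2[OF n nu(1) _ xA(1) nu(2) xA(2)] h1 by auto
    next
      case False
      hence up: "up A x = Node \<mu>" using X(3,6) UB xo by auto
      hence mA: "\<mu> \<in> verts A" using af_ends(1)[OF af xA(1)] by auto
      hence "\<mu> \<noteq> k1" "\<mu> \<noteq> k2" "\<mu> \<noteq> g3" "\<mu> \<noteq> g4" using h2 by auto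
      hence "lab A \<mu> = lab B \<mu>" using oldv X(2) by auto
      then show False using nw2[OF n nu(1) mA xA(1) nu(2) xA(2) up] X(7) by auto
    qed
  qed
qed

theorem proposition4p20:
  fixes A B :: "('v, 'e) flow"
  assumes "atomic_flow A"
    and "normal_w A"
    and "c_step\<^sup>*\<^sup>* A B"
  shows "normal_w B"
  using assms(3,2)
proof (induction rule: rtranclp_induct)
  case base
  then show ?case .
next
  case (step y z)
  then show ?case unfolding c_step_def using c1_pres c2_pres c3_pres by blast
qed

end
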